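(* Let $F_2=\langle a,b\rangle$ be the free group of rank two and let $\rho:F_2\to PSL(2,\mathbb{C})$ be a homomorphism with $\rho(a)$ parabolic. Then there is a homomorphism $\tilde\rho:F_2\to PSL(2,\mathbb{C})$ with $\tilde\rho(a)=\rho(a)$, $\tilde\rho(b)$ elliptic of order two, and \[\operatorname{tr}[\rho(a),\rho(b)]-2=\operatorname{tr}[\tilde\rho(a),\tilde\rho(b)]-2 .\] If $\rho(F_2)$ is discrete, then so is $\tilde\rho(F_2)$.
   Context: $[x,y]=xyx^{-1}y^{-1}$; the trace of a commutator is well defined in $PSL(2,\mathbb{C})$. *)

theory Defs
  imports "HOL-Analysis.Analysis"
begin

text \<open>Elements of PSL(2,C) are represented by lifts in SL(2,C), i.e. 2x2 complex
  matrices of determinant 1, considered up to sign.  A homomorphism from the free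
  group F2 = <a,b> is the same as a choice of images of a and b, so it is
  represented by a pair of lifts (A, B).\<close>

type_synonym mat2 = "complex ^ 2 ^ 2"

definition sl2 :: "mat2 \<Rightarrow> bool" where
  "sl2 M \<longleftrightarrow> det M = 1"

definition pm_id :: "mat2 \<Rightarrow> bool" where
  "pm_id M \<longleftrightarrow> M = mat 1 \<or> M = - mat 1"

definition parabolic :: "mat2 \<Rightarrow> bool" where
  "parabolic M \<longleftrightarrow> sl2 M \<and> \<not> pm_id M \<and> (trace M)\<^sup>2 = 4"

definition elliptic :: "mat2 \<Rightarrow> bool" where
  "elliptic M \<longleftrightarrow> sl2 M \<and> \<not> pm_id M \<and> trace M \<in> \<real> \<and> \<bar>Re (trace M)\<bar> < 2"

definition psl_order_two :: "mat2 \<Rightarrow> bool" where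
  "psl_order_two M \<longleftrightarrow> \<not> pm_id M \<and> pm_id (M ** M)"

definition commutator :: "mat2 \<Rightarrow> mat2 \<Rightarrow> mat2" where
  "commutator X Y = X ** Y ** matrix_inv X ** matrix_inv Y"

text \<open>Full preimage in SL(2,C) of the subgroup of PSL(2,C) generated by the
  classes of A and B (i.e. of the image rho(F2)).\<close>
inductive_set gen_preimage :: "mat2 \<Rightarrow> mat2 \<Rightarrow> mat2 set" for A B where
  one: "mat 1 \<in> gen_preimage A B"
| mone: "- mat 1 \<in> gen_preimage A B"
| lA: "g \<in> gen_preimage A B \<Longrightarrow> A ** g \<in> gen_preimage A B"
| lAi: "g \<in> gen_preimage A B \<Longrightarrow> matrix_inv A ** g \<in> gen_preimage A B"
| lB: "g \<in> gen_preimage A B \<Longrightarrow> B ** g \<in> gen_preimage A B"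
| lBi: "g \<in> gen_preimage A B \<Longrightarrow> matrix_inv B ** g \<in> gen_preimage A B"

text \<open>A subgroup of PSL(2,C) is discrete iff its preimage in SL(2,C) is a discrete
  subset (every point isolated).\<close>
definition discrete_set :: "mat2 set \<Rightarrow> bool" where
  "discrete_set S \<longleftrightarrow> (\<forall>x\<in>S. \<exists>e>0. \<forall>y\<in>S. dist y x < e \<longrightarrow> y = x)"

end

theory Submission
  imports Defs
begin


definition mk :: "complex \<Rightarrow> complex \<Rightarrow> complex \<Rightarrow> complex \<Rightarrow> mat2" where
  "mk a b c d = (\<chi> i j. if i = 1 then (if j = 1 then a else b) else (if j = 1 then c else d))"

lemma mk_nth[simp]: "mk a b c d $ 1 $ 1 = a" "mk a b c d $ 1 $ 2 = b"
  "mk a b c d $ 2 $ 1 = c" "mk a b c d $ 2 $ 2 = d"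
  by (simp_all add: mk_def)

lemma mat2_eq_iff: "(M::mat2) = N \<longleftrightarrow> M$1$1 = N$1$1 \<and> M$1$2 = N$1$2 \<and> M$2$1 = N$2$1 \<and> M$2$2 = N$2$2"
  by (auto simp: vec_eq_iff forall_2)

lemma mk_eta: "M = mk (M$1$1) (M$1$2) (M$2$1) (M$2$2)"
  by (simp add: mat2_eq_iff)

lemma mk_ex: obtains a b c d where "M = mk a b c d"
  using mk_eta by blast

lemma mk_eq_iff: "mk a b c d = mk a' b' c' d' \<longleftrightarrow> a = a' \<and> b = b' \<and> c = c' \<and> d = d'"
  by (simp add: mat2_eq_iff)

lemma mk_mult: "mk a b c d ** mk e f g h = mk (a*e+b*g) (a*f+b*h) (c*e+d*g) (c*f+d*h)"
  by (simp add: mat2_eq_iff matrix_matrix_mult_def sum_2)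

lemma mk_det: "det (mk a b c d) = a*d - b*c"
  by (simp add: det_2)

lemma mk_trace: "trace (mk a b c d) = a + d"
  by (simp add: trace_def sum_2)

lemma mk_one: "mat 1 = mk 1 0 0 1"
  by (simp add: mat2_eq_iff mat_def)

lemma mk_uminus: "- mk a b c d = mk (-a) (-b) (-c) (-d)"
  by (simp add: mat2_eq_iff)

lemma mk_add: "mk a b c d + mk a' b' c' d' = mk (a+a') (b+b') (c+c') (d+d')"
  by (simp add: mat2_eq_iff)

lemma mk_diff: "mk a b c d - mk a' b' c' d' = mk (a-a') (b-b') (c-c') (d-d')"
  by (simp add: mat2_eq_iff)

definition adj2 :: "mat2 \<Rightarrow> mat2" where
  "adj2 M = mk (M$2$2) (- M$1$2) (- M$2$1) (M$1$1)"

lemma adj2_mk[simp]: "adj2 (mk a b c d) = mk d (-b) (-c) a"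
  by (simp add: adj2_def)

lemma mult_adj2: "det M = 1 \<Longrightarrow> M ** adj2 M = mat 1"
  by (cases M rule: mk_ex) (simp add: mk_mult mk_one mk_det mk_eq_iff algebra_simps)

lemma adj2_mult: "det M = 1 \<Longrightarrow> adj2 M ** M = mat 1"
  by (cases M rule: mk_ex) (simp add: mk_mult mk_one mk_det mk_eq_iff algebra_simps)

lemma matrix_inv_adj2: assumes "det M = 1" shows "matrix_inv M = adj2 M"
proof -
  have ex: "\<exists>A'. M ** A' = mat 1 \<and> A' ** M = mat 1"
    using mult_adj2[OF assms] adj2_mult[OF assms] by blast
  define I where "I = matrix_inv M"
  have "M ** I = mat 1 \<and> I ** M = mat 1"
    unfolding I_def matrix_inv_def by (rule someI_ex[OF ex])
  then have "I = I ** (M ** adj2 M)" using mult_adj2[OF assms] by simp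
  also have "\<dots> = (I ** M) ** adj2 M" by (simp add: matrix_mul_assoc)
  also have "\<dots> = adj2 M" using \<open>M ** I = mat 1 \<and> I ** M = mat 1\<close> by simp
  finally show ?thesis unfolding I_def .
qed

lemma adj2_adj2[simp]: "adj2 (adj2 M) = M"
  by (cases M rule: mk_ex) simp

lemma adj2_prod: "adj2 (M ** N) = adj2 N ** adj2 M"
  by (cases M rule: mk_ex, cases N rule: mk_ex) (simp add: mk_mult mk_eq_iff algebra_simps)

lemma det_adj2: "det (adj2 M) = det M"
  by (cases M rule: mk_ex) (simp add: mk_det algebra_simps)

lemma adj2_uminus: "adj2 (- M) = - adj2 M"
  by (cases M rule: mk_ex) (simp add: mk_uminus)

lemma adj2_one[simp]: "adj2 (mat 1) = mat 1"
  by (simp add: mk_one)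

lemma det_mult2: "det ((M::mat2) ** N) = det M * det N"
  by (rule det_mul)

lemma cont_sq: "continuous_on UNIV (\<lambda>y::mat2. (y ** X) ** (y ** X))"
  unfolding matrix_matrix_mult_def by (intro continuous_intros)

lemma neg_mult_right: "- ((X::mat2) ** (Y::mat2)) = X ** (- Y)"
  by (cases X rule: mk_ex, cases Y rule: mk_ex) (simp add: mk_mult mk_uminus mk_eq_iff algebra_simps)

lemma neg_mult_left: "- ((X::mat2) ** (Y::mat2)) = (- X) ** Y"
  by (cases X rule: mk_ex, cases Y rule: mk_ex) (simp add: mk_mult mk_uminus mk_eq_iff algebra_simps)

lemma neg_one_mult: "(- mat 1) ** (X::mat2) = - X"
  by (simp add: neg_mult_left[symmetric])

lemma mult_neg_one: "(X::mat2) ** (- mat 1) = - X"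
  by (simp add: neg_mult_right[symmetric])

lemma det_neg_one: "det (- mat 1 :: mat2) = 1"
  by (simp add: mk_one mk_uminus mk_det)

context
  fixes A B :: mat2
  assumes dA: "det A = 1" and dB: "det B = 1"
begin

lemma G_det: "g \<in> gen_preimage A B \<Longrightarrow> det g = 1"
  by (induction rule: gen_preimage.induct)
     (simp_all add: det_neg_one det_mul dA dB matrix_inv_adj2 det_adj2)

lemma G_neg: "g \<in> gen_preimage A B \<Longrightarrow> - g \<in> gen_preimage A B"
proof (induction rule: gen_preimage.induct)
  case one then show ?case by (rule gen_preimage.mone)
next
  case mone then show ?case by (simp add: gen_preimage.one)
qed (simp_all add: neg_mult_right gen_preimage.intros)

lemma G_mult: "g \<in> gen_preimage A B \<Longrightarrow> k \<in> gen_preimage A B \<Longrightarrow> g ** k \<in> gen_preimage A B"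
proof (induction rule: gen_preimage.induct)
  case one then show ?case by simp
next
  case mone then show ?case by (simp add: neg_one_mult G_neg)
qed (simp_all add: matrix_mul_assoc[symmetric] gen_preimage.intros)

lemma G_A: "A \<in> gen_preimage A B"
  using gen_preimage.lA[OF gen_preimage.one, of A B] by simp
lemma G_B: "B \<in> gen_preimage A B"
  using gen_preimage.lB[OF gen_preimage.one, of B A] by simp
lemma G_Ai: "adj2 A \<in> gen_preimage A B"
  using gen_preimage.lAi[OF gen_preimage.one, of A B] by (simp add: matrix_inv_adj2 dA)
lemma G_Bi: "adj2 B \<in> gen_preimage A B"
  using gen_preimage.lBi[OF gen_preimage.one, of B A] by (simp add: matrix_inv_adj2 dB)

lemma G_inv: "g \<in> gen_preimage A B \<Longrightarrow> adj2 g \<in> gen_preimage A B"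
proof (induction rule: gen_preimage.induct)
  case one then show ?case by (simp add: gen_preimage.one)
next
  case mone then show ?case by (simp add: adj2_uminus gen_preimage.mone)
qed (simp_all add: adj2_prod G_mult G_A G_B G_Ai G_Bi matrix_inv_adj2 dA dB)

end


lemma sq_one_cases:
  assumes "det (z::mat2) = 1" "z ** z = mat 1"
  shows "z = mat 1 \<or> z = - mat 1"
proof -
  obtain a b c d where z: "z = mk a b c d" by (rule mk_ex)
  have e1: "a*d - b*c = 1" using assms(1) z by (simp add: mk_det)
  have e2: "a*a + b*c = 1" "a*b + b*d = 0" "c*a + d*c = 0" "c*b + d*d = 1"
    using assms(2) z by (simp_all add: mk_mult mk_one mk_eq_iff)
  have apd: "a + d \<noteq> 0"
  proof
    assume "a + d = 0"
    then have "d = -a" by (metis add.commute add_eq_0_iff)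
    have "a*d - b*c + (a*a + b*c) = 2" using e1 e2(1) by simp
    moreover have "a*d - b*c + (a*a + b*c) = 0" using \<open>d = -a\<close> by (simp add: algebra_simps)
    ultimately show False by simp
  qed
  have "b * (a + d) = 0" "c * (a + d) = 0" using e2 by (simp_all add: algebra_simps)
  then have bc: "b = 0" "c = 0" using apd by simp_all
  have "(a - d) * (a + d) = 0" using e2(1) e2(4) by (simp add: algebra_simps bc)
  then have "a = d" using apd by simp
  moreover have "a * a = 1" using e2(1) bc by simp
  ultimately have "(a = 1 \<and> d = 1) \<or> (a = -1 \<and> d = -1)"
    by (metis power2_eq_square square_eq_1_iff)
  then show ?thesis using z bc by (auto simp: mk_one mk_uminus)
qed

lemma adj2_h: assumes "det h = 1" "h ** h = - mat 1" shows "adj2 h = - h"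
proof -
  have "adj2 h = adj2 h ** mat 1" by simp
  also have "\<dots> = - (adj2 h ** (h ** h))" using assms(2) by (simp add: neg_mult_right)
  also have "\<dots> = - ((adj2 h ** h) ** h)" by (simp add: matrix_mul_assoc)
  also have "\<dots> = - h" using adj2_mult[OF assms(1)] by simp
  finally show ?thesis .
qed

lemma disc_ext:
  fixes A B h :: mat2
  assumes dA: "det A = 1" and dB: "det B = 1" and dh: "det h = 1"
    and hh: "h ** h = - mat 1" and hA: "h ** A ** h \<in> gen_preimage A B"
    and disc: "discrete_set (gen_preimage A B)"
  shows "discrete_set (gen_preimage A h)"
proof -
  define G where "G = gen_preimage A B"
  define T where "T = {g \<in> G. h ** g ** h \<in> G}"
  have hh': "h ** (h ** X) = - X" for X :: mat2 using hh
    by (simp add: matrix_mul_assoc neg_one_mult)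
  have ah: "adj2 h = - h" by (rule adj2_h[OF dh hh])
  have Gm: "g \<in> G \<Longrightarrow> k \<in> G \<Longrightarrow> g ** k \<in> G" for g k
    unfolding G_def by (rule G_mult[OF dA dB])
  have Gn: "g \<in> G \<Longrightarrow> - g \<in> G" for g
    unfolding G_def by (rule G_neg[OF dA dB])
  have Gi: "g \<in> G \<Longrightarrow> adj2 g \<in> G" for g
    unfolding G_def by (rule G_inv[OF dA dB])
  have T1: "mat 1 \<in> T" unfolding T_def using hh gen_preimage.intros
    by (simp add: G_def)
  have Tn: "g \<in> T \<Longrightarrow> - g \<in> T" for g
    unfolding T_def using Gn by (auto simp: neg_mult_right[symmetric] neg_mult_left[symmetric])
  have Tm: "g \<in> T \<Longrightarrow> k \<in> T \<Longrightarrow> g ** k \<in> T" for g k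
  proof -
    assume g: "g \<in> T" and k: "k \<in> T"
    have "(h ** g ** h) ** (h ** k ** h) = - (h ** (g ** k) ** h)"
      by (simp add: matrix_mul_assoc[symmetric] hh' neg_mult_right[symmetric] neg_mult_left[symmetric])
    then have "h ** (g ** k) ** h = - ((h ** g ** h) ** (h ** k ** h))" by simp
    then show ?thesis using g k Gm Gn unfolding T_def by auto
  qed
  have Ti: "g \<in> T \<Longrightarrow> adj2 g \<in> T" for g
  proof -
    assume g: "g \<in> T"
    have "adj2 (h ** g ** h) = h ** adj2 g ** h"
      by (simp add: adj2_prod ah matrix_mul_assoc[symmetric] neg_mult_right[symmetric] neg_mult_left[symmetric])
    then show ?thesis using g Gi[of "h ** g ** h"] Gi[of g] unfolding T_def by simp
  qed
  have TA: "A \<in> T" unfolding T_def G_def using G_A[OF dA dB] hA by simp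
  have TAi: "adj2 A \<in> T" by (rule Ti[OF TA])
  have Tc: "g \<in> T \<Longrightarrow> h ** g ** h \<in> T" for g
    unfolding T_def by (auto simp: matrix_mul_assoc[symmetric] hh' hh mult_neg_one neg_mult_right[symmetric] neg_mult_left[symmetric])
  have TG: "g \<in> T \<Longrightarrow> g \<in> G" for g unfolding T_def by simp
  define P where "P y \<longleftrightarrow> y \<in> T \<or> y ** h \<in> T" for y
  have Pgen: "y \<in> gen_preimage A h \<Longrightarrow> P y" for y
  proof (induction rule: gen_preimage.induct)
    case one then show ?case using T1 by (simp add: P_def)
  next
    case mone then show ?case using T1 Tn by (simp add: P_def)
  next
    case (lA g) then show ?case using Tm[OF TA] by (auto simp: P_def matrix_mul_assoc[symmetric])
  next
    case (lAi g) then show ?case using Tm[OF TAi] by (auto simp: P_def matrix_mul_assoc[symmetric] matrix_inv_adj2 dA)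
  next
    case (lB g)
    then consider "g \<in> T" | "g ** h \<in> T" unfolding P_def by blast
    then show ?case
    proof cases
      case 1 then show ?thesis using Tc[OF 1] by (simp add: P_def matrix_mul_assoc[symmetric])
    next
      case 2
      have "h ** (g ** h) ** h = - (h ** g)"
        by (simp add: matrix_mul_assoc[symmetric] hh neg_mult_right[symmetric] neg_one_mult)
      then have "h ** g = - (h ** (g ** h) ** h)" by simp
      then show ?thesis using Tc[OF 2] Tn by (simp add: P_def)
    qed
  next
    case (lBi g)
    then consider "g \<in> T" | "g ** h \<in> T" unfolding P_def by blast
    then have "P (h ** g)"
    proof cases
      case 1 then show ?thesis using Tc[OF 1] by (simp add: P_def matrix_mul_assoc[symmetric])
    next
      case 2
      have "h ** (g ** h) ** h = - (h ** g)"
        by (simp add: matrix_mul_assoc[symmetric] hh neg_mult_right[symmetric] neg_one_mult)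
      then have "h ** g = - (h ** (g ** h) ** h)" by simp
      then show ?thesis using Tc[OF 2] Tn by (simp add: P_def)
    qed
    moreover have "matrix_inv h ** g = - (h ** g)"
      by (simp add: matrix_inv_adj2 dh ah neg_mult_left)
    ultimately show ?case using Tn
      by (auto simp: P_def neg_mult_left[symmetric])
  qed
  have yh: "y = - ((y ** h) ** h)" for y :: mat2
    by (simp add: matrix_mul_assoc[symmetric] hh mult_neg_one)
  have Pm: "P y \<Longrightarrow> P k \<Longrightarrow> P (y ** k)" for y k
  proof -
    assume py: "P y" and pk: "P k"
    consider "y \<in> T" "k \<in> T" | "y \<in> T" "k ** h \<in> T" | "y ** h \<in> T" "k \<in> T"
      | "y ** h \<in> T" "k ** h \<in> T" using py pk unfolding P_def by blast
    then show "P (y ** k)"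
    proof cases
      case 1 then show ?thesis using Tm by (simp add: P_def)
    next
      case 2 then show ?thesis using Tm by (simp add: P_def matrix_mul_assoc[symmetric])
    next
      case 3
      define t where "t = y ** h"
      have "y ** k ** h = - (t ** (h ** k ** h))"
        by (subst yh[of y]) (simp add: t_def matrix_mul_assoc[symmetric] neg_mult_left[symmetric])
      then show ?thesis using 3 Tm Tn Tc unfolding P_def t_def by metis
    next
      case 4
      define t where "t = y ** h"
      define u where "u = k ** h"
      have "y ** k = t ** (h ** u ** h)"
        by (subst yh[of y], subst yh[of k]) (simp add: t_def u_def matrix_mul_assoc[symmetric]
            neg_mult_left[symmetric] neg_mult_right[symmetric])
      then show ?thesis using 4 Tm Tc unfolding P_def t_def u_def by metis
    qed
  qed
  have Pi: "P y \<Longrightarrow> P (adj2 y)" for y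
  proof -
    assume "P y"
    then consider "y \<in> T" | "y ** h \<in> T" unfolding P_def by blast
    then show "P (adj2 y)"
    proof cases
      case 1 then show ?thesis using Ti by (simp add: P_def)
    next
      case 2
      define t where "t = y ** h"
      have "adj2 y ** h = h ** adj2 t ** h"
        by (subst yh[of y]) (simp add: t_def adj2_uminus adj2_prod ah
             neg_mult_left[symmetric] neg_mult_right[symmetric])
      then show ?thesis using 2 Ti Tc unfolding P_def t_def by metis
    qed
  qed
  have Psq: "P z \<Longrightarrow> z ** z \<in> T" for z
  proof -
    assume "P z"
    then consider "z \<in> T" | "z ** h \<in> T" unfolding P_def by blast
    then show "z ** z \<in> T"
    proof cases
      case 1 then show ?thesis using Tm by simp
    next
      case 2
      define t where "t = z ** h"
      have "z ** z = t ** (h ** t ** h)"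
        by (subst (1 2) yh[of z]) (simp add: t_def matrix_mul_assoc[symmetric]
            neg_mult_left[symmetric] neg_mult_right[symmetric])
      then show ?thesis using 2 Tm Tc unfolding t_def by metis
    qed
  qed
  have dH: "x \<in> gen_preimage A h \<Longrightarrow> det x = 1" for x by (rule G_det[OF dA dh])
  obtain e where e: "e > 0" "\<forall>y\<in>G. dist y (mat 1) < e \<longrightarrow> y = mat 1"
    using disc gen_preimage.one unfolding discrete_set_def G_def by blast
  show ?thesis unfolding discrete_set_def
  proof
    fix x assume xH: "x \<in> gen_preimage A h"
    define f where "f y = (y ** adj2 x) ** (y ** adj2 x)" for y
    have fx: "f x = mat 1" using mult_adj2[OF dH[OF xH]] by (simp add: f_def)
    have "continuous_on UNIV f" unfolding f_def by (rule cont_sq)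
    then obtain d where d: "d > 0" "\<forall>y. dist y x < d \<longrightarrow> dist (f y) (f x) < e"
      using e(1) unfolding continuous_on_iff by blast
    have "x \<noteq> 0" using dH[OF xH] by (auto simp: det_2)
    have "x \<noteq> - x"
    proof
      assume "x = - x"
      then have "(2::real) *\<^sub>R x = 0" by (metis scaleR_2 add.right_inverse)
      with \<open>x \<noteq> 0\<close> show False by simp
    qed
    then have xn: "dist x (- x) > 0" by simp
    show "\<exists>e>0. \<forall>y\<in>gen_preimage A h. dist y x < e \<longrightarrow> y = x"
    proof (intro exI[of _ "min d (dist x (- x))"] conjI ballI impI)
      show "min d (dist x (- x)) > 0" using d xn by simp
      fix y assume yH: "y \<in> gen_preimage A h" and dy: "dist y x < min d (dist x (- x))"
      define z where "z = y ** adj2 x"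
      have "P z" unfolding z_def by (rule Pm[OF Pgen[OF yH] Pi[OF Pgen[OF xH]]])
      then have "f y \<in> G" using Psq TG by (simp add: f_def z_def)
      moreover have "dist (f y) (mat 1) < e" using d dy fx by auto
      ultimately have fy: "z ** z = mat 1" using e(2) by (simp add: f_def z_def)
      have "det z = 1" unfolding z_def using dH[OF yH] dH[OF xH] by (simp add: det_mul det_adj2)
      then have zc: "z = mat 1 \<or> z = - mat 1" using sq_one_cases fy by blast
      have yz: "y = z ** x" unfolding z_def
        using adj2_mult[OF dH[OF xH]] by (simp add: matrix_mul_assoc[symmetric])
      from zc show "y = x"
      proof
        assume "z = - mat 1"
        then have "y = - x" using yz by (simp add: neg_one_mult)
        then show ?thesis using dy by (simp add: dist_commute)
      qed (simp add: yz)
    qed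
  qed
qed



definition Am :: "complex \<Rightarrow> complex \<Rightarrow> complex \<Rightarrow> mat2" where
  "Am s u v = mk (s * (1+u * v)) (-s * u^2) (s * v^2) (s * (1-u * v))"

lemma tr_comm_B:
  assumes "s^2 = 1" "b1 * b4 - b2 * b3 = 1"
  shows "trace (Am s u v ** mk b1 b2 b3 b4 ** adj2 (Am s u v) ** adj2 (mk b1 b2 b3 b4))
     = 2 + (v * (b1 * u+b2 * v) - u * (b3 * u+b4 * v))^2"
  using assms unfolding Am_def by (simp add: mk_mult mk_trace) algebra

definition H1 :: "complex \<Rightarrow> complex \<Rightarrow> complex \<Rightarrow> complex \<Rightarrow> complex \<Rightarrow> mat2" where
  "H1 u v u' v' k = mk (k * (u * v + u' * v')) (-k * (u^2+u'^2)) (k * (v^2+v'^2)) (-k * (u * v+u' * v'))"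

lemma tr_comm_H1:
  assumes "s^2 = 1" "k * (v * u' - u * v') = 1"
  shows "trace (Am s u v ** H1 u v u' v' k ** adj2 (Am s u v) ** adj2 (H1 u v u' v' k))
     = 2 + (v * u' - u * v')^2"
  using assms unfolding Am_def H1_def by (simp add: mk_mult mk_trace) algebra

lemma H1_det:
  assumes "k * (v * u' - u * v') = 1"
  shows "det (H1 u v u' v' k) = 1"
  using assms unfolding H1_def
  by (simp add: mk_det) algebra

lemma H1_sq:
  assumes "k * (v * u' - u * v') = 1"
  shows "H1 u v u' v' k ** H1 u v u' v' k = - mat 1"
  using assms unfolding H1_def
  by (simp add: mk_mult mk_one mk_uminus mk_eq_iff; algebra)

lemma H1_tr: "trace (H1 u v u' v' k) = 0"
  unfolding H1_def by (simp add: mk_trace)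

lemma H1_conj:
  assumes "s^2 = 1" "b1 * b4 - b2 * b3 = 1" "u' = b1 * u + b2 * v" "v' = b3 * u + b4 * v"
    "k * (v * u' - u * v') = 1"
  shows "H1 u v u' v' k ** Am s u v ** H1 u v u' v' k = - (mk b1 b2 b3 b4 ** Am s u v ** adj2 (mk b1 b2 b3 b4))"
  using assms unfolding H1_def Am_def
  by (simp add: mk_mult mk_uminus mk_eq_iff; algebra)

lemma ii: "\<i> * \<i> = -1" by simp

definition H0 :: "complex \<Rightarrow> complex \<Rightarrow> complex \<Rightarrow> complex \<Rightarrow> mat2" where
  "H0 u v x y = mk (\<i> * (u * y + v * x)) (-2 * \<i> * u * x) (2 * \<i> * v * y) (- \<i> * (u * y + v * x))"

lemma H0_det:
  assumes "u * y - v * x = 1"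
  shows "det (H0 u v x y) = 1"
  using assms unfolding H0_def
  by (simp add: mk_det) (insert ii, algebra)

lemma H0_sq:
  assumes "u * y - v * x = 1"
  shows "H0 u v x y ** H0 u v x y = - mat 1"
  using assms unfolding H0_def
  by (simp add: mk_mult mk_one mk_uminus mk_eq_iff; insert ii; algebra)

lemma H0_tr: "trace (H0 u v x y) = 0"
  unfolding H0_def by (simp add: mk_trace algebra_simps)

lemma H0_conj:
  assumes "s^2 = 1" "u * y - v * x = 1"
  shows "H0 u v x y ** Am s u v ** H0 u v x y = - adj2 (Am s u v)"
  using assms unfolding H0_def Am_def
  by (simp add: mk_mult mk_uminus mk_eq_iff; insert ii; algebra)

lemma tr_comm_H0:
  assumes "s^2 = 1" "u * y - v * x = 1"
  shows "trace (Am s u v ** H0 u v x y ** adj2 (Am s u v) ** adj2 (H0 u v x y)) = 2"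
  using assms unfolding H0_def Am_def
  by (simp add: mk_mult mk_trace) (insert ii, algebra)

lemma parabolic_form:
  assumes "parabolic A"
  obtains s u v where "s^2 = 1" "u \<noteq> 0 \<or> v \<noteq> 0" "A = Am s u v"
proof -
  obtain a b c d where A: "A = mk a b c d" by (rule mk_ex)
  have det: "a * d - b * c = 1" and tr: "(a + d)^2 = 4" and np: "\<not> pm_id A"
    using assms A by (auto simp: parabolic_def sl2_def mk_det mk_trace)
  define s where "s = (a + d) / 2"
  have s2: "s^2 = 1" using tr by (simp add: s_def power_divide)
  have sad: "s * (a + d) = 2" using s2 by (simp add: s_def power2_eq_square)
  define p where "p = s * a - 1"
  define q where "q = s * b"
  define r where "r = s * c"
  have pqr: "p * p + q * r = 0" unfolding p_def q_def r_def using s2 sad det by algebra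
  obtain u v where uv: "u * v = p" "u * u = - q" "v * v = r"
  proof (cases "q = 0")
    case True
    then have "p = 0" using pqr by simp
    show ?thesis by (rule that[of 0 "csqrt r"]) (simp_all add: True \<open>p = 0\<close> power2_eq_square[symmetric])
  next
    case False
    define u where "u = csqrt (- q)"
    have uu: "u * u = - q" unfolding u_def by (simp add: power2_eq_square[symmetric])
    then have u0: "u \<noteq> 0" using False by auto
    have "(p / u) * (p / u) = r"
    proof -
      have "(p / u) * (p / u) = (p * p) / (u * u)" by simp
      also have "\<dots> = (- (q * r)) / (- q)"
      proof -
        have "p * p = - (q * r)" using pqr by (simp add: eq_neg_iff_add_eq_0)
        then show ?thesis using uu by simp
      qed
      also have "\<dots> = r" using False by simp
      finally show ?thesis .
    qed
    then show ?thesis by (intro that[of u "p / u"]) (simp_all add: u0 uu)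
  qed
  have AA: "A = Am s u v"
    unfolding A Am_def mk_eq_iff power2_eq_square
  proof (intro conjI)
    show "a = s * (1 + u * v)" using uv s2 unfolding p_def by algebra
    have ss: "s * s = 1" using s2 by (simp add: power2_eq_square)
    show "b = - s * (u * u)" using uv(2) ss unfolding q_def by (simp add: mult.assoc[symmetric])
    show "c = s * (v * v)" using uv(3) ss unfolding r_def by (simp add: mult.assoc[symmetric])
    show "d = s * (1 - u * v)" using uv s2 sad unfolding p_def by algebra
  qed
  have "u \<noteq> 0 \<or> v \<noteq> 0"
  proof (rule ccontr)
    assume "\<not> (u \<noteq> 0 \<or> v \<noteq> 0)"
    then have "A = mk s 0 0 s" using AA by (simp add: Am_def)
    moreover have "s = 1 \<or> s = -1" using s2 by (simp add: power2_eq_1_iff)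
    ultimately have "pm_id A" by (auto simp: pm_id_def mk_one mk_uminus)
    then show False using np by simp
  qed
  then show ?thesis using that s2 AA by blast
qed

lemma tr0_not_pm: "trace (M::mat2) = 0 \<Longrightarrow> \<not> pm_id M"
  by (auto simp: pm_id_def mk_one mk_uminus mk_trace)



theorem theorem6:
  fixes A B :: mat2
  assumes "sl2 A" and "sl2 B" and "parabolic A"
  shows "\<exists>B'. sl2 B' \<and> elliptic B' \<and> psl_order_two B' \<and>
           trace (commutator A B) - 2 = trace (commutator A B') - 2 \<and>
           (discrete_set (gen_preimage A B) \<longrightarrow> discrete_set (gen_preimage A B'))"
proof -
  obtain s u v where s2: "s^2 = 1" and uv0: "u \<noteq> 0 \<or> v \<noteq> 0" and AA: "A = Am s u v"
    using parabolic_form[OF assms(3)] by blast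
  obtain b1 b2 b3 b4 where BB: "B = mk b1 b2 b3 b4" by (rule mk_ex)
  have dA: "det A = 1" and dB: "det B = 1" using assms by (auto simp: sl2_def)
  then have db: "b1 * b4 - b2 * b3 = 1" using BB by (simp add: mk_det)
  define u' where "u' = b1 * u + b2 * v"
  define v' where "v' = b3 * u + b4 * v"
  define D where "D = v * u' - u * v'"
  have comm: "commutator A X = A ** X ** adj2 A ** adj2 X" if "det X = 1" for X
    unfolding commutator_def using that dA by (simp add: matrix_inv_adj2)
  have trB: "trace (commutator A B) = 2 + D^2"
    using comm[OF dB] tr_comm_B[OF s2 db, of u v] by (simp add: AA BB D_def u'_def v'_def)
  have main: "\<exists>B'. det B' = 1 \<and> B' ** B' = - mat 1 \<and> trace B' = 0 \<and>
      trace (commutator A B') = 2 + D^2 \<and> B' ** A ** B' \<in> gen_preimage A B"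
  proof (cases "D = 0")
    case False
    define k where "k = 1 / D"
    have k: "k * (v * u' - u * v') = 1" using False by (simp add: k_def D_def)
    define H where "H = H1 u v u' v' k"
    have dH: "det H = 1" unfolding H_def by (rule H1_det[OF k])
    have "trace (commutator A H) = 2 + D^2"
      using comm[OF dH] tr_comm_H1[OF s2 k] by (simp add: AA H_def D_def)
    moreover have "H ** A ** H \<in> gen_preimage A B"
    proof -
      have "H ** A ** H = - (B ** A ** adj2 B)"
        using H1_conj[OF s2 db u'_def v'_def k] by (simp add: H_def AA BB)
      moreover have "B ** A ** adj2 B \<in> gen_preimage A B"
        by (intro G_mult[OF dA dB] G_A[OF dA dB] G_B[OF dA dB] G_Bi[OF dA dB])
      ultimately show ?thesis using G_neg[OF dA dB] by simp
    qed
    ultimately show ?thesis using dH H1_sq[OF k] H1_tr unfolding H_def by blast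
  next
    case True
    obtain x y where xy: "u * y - v * x = 1"
    proof (cases "u = 0")
      case True
      then have "v \<noteq> 0" using uv0 by simp
      then show ?thesis using True by (intro that[of 0 "- 1 / v"]) simp
    next
      case False
      then show ?thesis by (intro that[of "1 / u" 0]) simp
    qed
    define H where "H = H0 u v x y"
    have dH: "det H = 1" unfolding H_def by (rule H0_det[OF xy])
    have "trace (commutator A H) = 2 + D^2"
      using comm[OF dH] tr_comm_H0[OF s2 xy] True by (simp add: AA H_def)
    moreover have "H ** A ** H \<in> gen_preimage A B"
      using H0_conj[OF s2 xy] G_neg[OF dA dB G_Ai[OF dA dB]] by (simp add: H_def AA)
    ultimately show ?thesis using dH H0_sq[OF xy] H0_tr unfolding H_def by blast
  qed
  then obtain H where dH: "det H = 1" and HH: "H ** H = - mat 1" and tH: "trace H = 0"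
    and trH: "trace (commutator A H) = 2 + D^2" and HA: "H ** A ** H \<in> gen_preimage A B"
    by blast
  have "sl2 H" using dH by (simp add: sl2_def)
  moreover have "elliptic H" using dH tH tr0_not_pm[OF tH] by (simp add: elliptic_def sl2_def)
  moreover have "psl_order_two H" using tr0_not_pm[OF tH] HH by (simp add: psl_order_two_def pm_id_def)
  moreover have "trace (commutator A B) - 2 = trace (commutator A H) - 2" using trB trH by simp
  moreover have "discrete_set (gen_preimage A B) \<longrightarrow> discrete_set (gen_preimage A H)"
    using disc_ext[OF dA dB dH HH HA] by blast
  ultimately show ?thesis by blast
qed

end
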